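(* Let $c_1,c_2\in\mathbb{R}$ with $c_1c_2=0$ and $c:=\max\{|c_1|,|c_2|\}\neq0$. Let $c_{2k-1}=c_1$, $c_{2k}=c_2$ for $k\in\mathbb{N}$, and let $J$ be the self-adjoint operator in $l^2(\mathbb{N})$ given by the (block-diagonal) matrix with diagonal entries $q_n=n$ and off-diagonal entries $\lambda_n=c_nn$, i.e. $(Ju)_1=u_1+c_1u_2$, $(Ju)_n=\lambda_{n-1}u_{n-1}+nu_n+\lambda_nu_{n+1}$ for $n\ge2$, on its natural domain $\{u\in l^2(\mathbb{N}):Ju\in l^2(\mathbb{N})\}$. Then $\sigma(J)$ is the closure of the set of eigenvalues of $J$, and this set of eigenvalues is $$\{\lambda_n^+,\lambda_n^-:\ n\in\mathbb{N}\}\ \text{ if } c_1\neq0,\ c_2=0,\qquad \{1\}\cup\{\tilde\lambda_n^+,\tilde\lambda_n^-:\ n\ge2\}\ \text{ if } c_1=0,\ c_2\neq0,$$ where $\lambda_n^{\pm}=\frac{4n-1\pm\sqrt{4c^2(2n-1)^2+1}}{2}$ and $\tilde\lambda_n^{\pm}=\frac{4n-3\pm\sqrt{4c^2(2n-2)^2+1}}{2}$, and as $n\to\infty$: $$\lambda_n^+,\ \tilde\lambda_n^+=2(1+c)n+O(1),$$ $$\lambda_n^-=2(1-c)n+\left(c-\tfrac12\right)-\frac1{16cn}+O\left(\tfrac1{n^2}\right),$$ $$\tilde\lambda_n^-=2(1-c)n+\left(2c-\tfrac32\right)-\frac1{16cn}+O\left(\tfrac1{n^2}\right).$$ *)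

theory Defs
  imports "HOL-Analysis.Analysis" "HOL-Library.Landau_Symbols"
begin

text \<open>Sequences in l^2(N), N = {1,2,...}, are represented as functions nat => complex
  that vanish at index 0 and are square summable. Index n >= 1 is the paper's index n.\<close>

definition ell2 :: "(nat \<Rightarrow> complex) set" where
  "ell2 = {u. u 0 = 0 \<and> summable (\<lambda>n. (cmod (u n))\<^sup>2)}"

definition l2norm :: "(nat \<Rightarrow> complex) \<Rightarrow> real" where
  "l2norm u = sqrt (\<Sum>n. (cmod (u n))\<^sup>2)"

definition cseq :: "real \<Rightarrow> real \<Rightarrow> nat \<Rightarrow> real" where
  "cseq c1 c2 n = (if odd n then c1 else c2)"

text \<open>Off-diagonal entries lambda_n = c_n n (lambda_0 = 0 by convention).\<close>
definition offdiag :: "real \<Rightarrow> real \<Rightarrow> nat \<Rightarrow> real" where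
  "offdiag c1 c2 n = cseq c1 c2 n * real n"

definition Jop :: "real \<Rightarrow> real \<Rightarrow> (nat \<Rightarrow> complex) \<Rightarrow> (nat \<Rightarrow> complex)" where
  "Jop c1 c2 u n = (if n = 0 then 0 else
      of_real (offdiag c1 c2 (n - 1)) * u (n - 1) + of_nat n * u n
      + of_real (offdiag c1 c2 n) * u (n + 1))"

definition domJ :: "real \<Rightarrow> real \<Rightarrow> (nat \<Rightarrow> complex) set" where
  "domJ c1 c2 = {u \<in> ell2. Jop c1 c2 u \<in> ell2}"

definition eigenvalues_J :: "real \<Rightarrow> real \<Rightarrow> complex set" where
  "eigenvalues_J c1 c2 = {z. \<exists>u \<in> domJ c1 c2. u \<noteq> (\<lambda>_. 0) \<and> Jop c1 c2 u = (\<lambda>n. z * u n)}"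

definition resolvent_set_J :: "real \<Rightarrow> real \<Rightarrow> complex set" where
  "resolvent_set_J c1 c2 = {z.
     bij_betw (\<lambda>u n. Jop c1 c2 u n - z * u n) (domJ c1 c2) ell2 \<and>
     (\<exists>C. \<forall>u \<in> domJ c1 c2. l2norm u \<le> C * l2norm (\<lambda>n. Jop c1 c2 u n - z * u n))}"

definition spectrum_J :: "real \<Rightarrow> real \<Rightarrow> complex set" where
  "spectrum_J c1 c2 = UNIV - resolvent_set_J c1 c2"

definition lam_plus :: "real \<Rightarrow> nat \<Rightarrow> real" where
  "lam_plus c n = (4 * real n - 1 + sqrt (4 * c\<^sup>2 * (2 * real n - 1)\<^sup>2 + 1)) / 2"
definition lam_minus :: "real \<Rightarrow> nat \<Rightarrow> real" where
  "lam_minus c n = (4 * real n - 1 - sqrt (4 * c\<^sup>2 * (2 * real n - 1)\<^sup>2 + 1)) / 2"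
definition tlam_plus :: "real \<Rightarrow> nat \<Rightarrow> real" where
  "tlam_plus c n = (4 * real n - 3 + sqrt (4 * c\<^sup>2 * (2 * real n - 2)\<^sup>2 + 1)) / 2"
definition tlam_minus :: "real \<Rightarrow> nat \<Rightarrow> real" where
  "tlam_minus c n = (4 * real n - 3 - sqrt (4 * c\<^sup>2 * (2 * real n - 2)\<^sup>2 + 1)) / 2"

end

theory Submission
  imports Defs
begin


lemma asym_pt:
  fixes c b x :: real
  assumes c: "c > 0" and b: "b \<ge> 0" and x: "x \<ge> 1" and X: "4*c*x - b \<ge> 2*c*x"
  shows "\<bar>((4*c*x - b) - sqrt ((4*c*x - b)\<^sup>2 + 1))/2 + 1/(16*c*x)\<bar> \<le> ((2 + 4*b)/(128*c\<^sup>2)) * (1 / x\<^sup>2)"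
proof -
  define X where "X = 4*c*x - b"
  define S where "S = sqrt (X\<^sup>2 + 1)"
  have X0: "X \<ge> 2*c*x" using X X_def by simp
  have cx: "c*x > 0" using c x by simp
  have Xp: "X > 0" using X0 cx by linarith
  have S2: "S\<^sup>2 = X\<^sup>2 + 1" unfolding S_def by simp
  have SX: "S \<ge> X" unfolding S_def by (rule real_le_rsqrt) simp
  have SX1: "S \<le> X + 1"
  proof -
    have "sqrt (X\<^sup>2+1) \<le> sqrt ((X+1)\<^sup>2)" by (rule real_sqrt_le_mono) (use Xp in \<open>simp add: power2_eq_square algebra_simps\<close>)
    thus ?thesis using Xp S_def by simp
  qed
  have SXp: "S + X \<ge> 4*c*x" using SX X0 by linarith
  have SXpos: "S + X > 0" using SXp cx by linarith
  have diff: "X - S = - 1/(S+X)"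
  proof -
    have "(X - S)*(S+X) = -1" using S2 by (simp add: algebra_simps power2_eq_square)
    thus ?thesis using SXpos by (simp add: field_simps)
  qed
  have eq: "(X - S)/2 + 1/(16*c*x) = (2*(S - X) - 4*b)/(32*c*x*(S+X))"
  proof -
    have "(X - S)/2 + 1/(16*c*x) = -1/(2*(S+X)) + 1/(16*c*x)" using diff by simp
    also have "\<dots> = (2*(S+X) - 16*c*x)/(32*c*x*(S+X))" using SXpos c x by (simp add: field_simps)
    also have "2*(S+X) - 16*c*x = 2*(S - X) - 4*b" using X_def by simp
    finally show ?thesis .
  qed
  have num: "\<bar>2*(S - X) - 4*b\<bar> \<le> 2 + 4*b" using SX SX1 b by (intro abs_leI) (simp_all add: algebra_simps)
  have den: "32*c*x*(S+X) \<ge> 128*c\<^sup>2*x\<^sup>2"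
  proof -
    have "32*c*x*(S+X) \<ge> 32*c*x*(4*c*x)" using SXp cx by (intro mult_left_mono) auto
    thus ?thesis by (simp add: power2_eq_square algebra_simps)
  qed
  have dpos: "128*c\<^sup>2*x\<^sup>2 > 0" using c x by simp
  have "\<bar>(2*(S - X) - 4*b)/(32*c*x*(S+X))\<bar> = \<bar>2*(S - X) - 4*b\<bar>/(32*c*x*(S+X))"
    using SXpos cx by (simp only: abs_divide abs_of_pos[of "32*c*x*(S+X)"] mult_pos_pos)
  also have "\<dots> \<le> (2 + 4*b)/(128*c\<^sup>2*x\<^sup>2)"
    by (rule frac_le[OF _ num dpos den]) (use b in simp)
  also have "\<dots> = ((2 + 4*b)/(128*c\<^sup>2)) * (1 / x\<^sup>2)" by simp
  finally show ?thesis using eq X_def S_def by simp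
qed

lemma asym_minus:
  fixes c b :: real
  assumes c: "c > 0" and b: "b \<ge> 0"
  shows "(\<lambda>n::nat. ((4*c*real n - b) - sqrt ((4*c*real n - b)\<^sup>2 + 1))/2 + 1/(16*c*real n))
     \<in> O(\<lambda>n. 1/(real n)\<^sup>2)"
proof (rule bigoI[where c="(2 + 4*b)/(128*c\<^sup>2)"])
  obtain N :: nat where N: "real N \<ge> b/(2*c) + 1" by (meson real_arch_simple)
  show "\<forall>\<^sub>F n in sequentially. norm (((4*c*real n - b) - sqrt ((4*c*real n - b)\<^sup>2 + 1))/2 + 1/(16*c*real n))
        \<le> (2 + 4*b)/(128*c\<^sup>2) * norm (1/(real n)\<^sup>2)"
  proof (rule eventually_sequentiallyI[of N])
    fix n assume n: "N \<le> n"
    hence n1: "real n \<ge> b/(2*c) + 1" using N by linarith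
    have "b/(2*c) \<ge> 0" using b c by simp
    hence x1: "real n \<ge> 1" using n1 by linarith
    have "2*c*real n \<ge> 2*c*(b/(2*c))" using n1 c by (intro mult_left_mono) auto
    hence "2*c*real n \<ge> b" using c by simp
    hence X: "4*c*real n - b \<ge> 2*c*real n" by linarith
    show "norm (((4*c*real n - b) - sqrt ((4*c*real n - b)\<^sup>2 + 1))/2 + 1/(16*c*real n))
        \<le> (2 + 4*b)/(128*c\<^sup>2) * norm (1/(real n)\<^sup>2)"
      using asym_pt[OF c b x1 X] by simp
  qed
qed

lemma asym_plus:
  fixes c b :: real
  assumes c: "c > 0" and b: "b \<ge> 0"
  shows "(\<lambda>n::nat. (sqrt ((4*c*real n - b)\<^sup>2 + 1) - (4*c*real n - b))) \<in> O(\<lambda>n. 1)"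
proof (rule bigoI[where c="1 + 2*b"])
  obtain N :: nat where N: "real N \<ge> b/(4*c)" by (meson real_arch_simple)
  show "\<forall>\<^sub>F n in sequentially. norm (sqrt ((4*c*real n - b)\<^sup>2 + 1) - (4*c*real n - b)) \<le> (1 + 2*b) * norm (1::real)"
  proof (rule eventually_sequentiallyI[of N])
    fix n assume n: "N \<le> n"
    define X where "X = 4*c*real n - b"
    have "4*c*real n \<ge> 4*c*(b/(4*c))" using n N c by (intro mult_left_mono) auto
    hence Xp: "X \<ge> 0" using c X_def by simp
    have SX: "sqrt (X\<^sup>2+1) \<ge> X" by (rule real_le_rsqrt) simp
    have SX1: "sqrt (X\<^sup>2+1) \<le> X + 1"
    proof -
      have "sqrt (X\<^sup>2+1) \<le> sqrt ((X+1)\<^sup>2)" by (rule real_sqrt_le_mono) (use Xp in \<open>simp add: power2_eq_square algebra_simps\<close>)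
      thus ?thesis using Xp by simp
    qed
    show "norm (sqrt ((4*c*real n - b)\<^sup>2 + 1) - (4*c*real n - b)) \<le> (1 + 2*b) * norm (1::real)"
    proof -
      have "\<bar>sqrt (X\<^sup>2+1) - X\<bar> \<le> 1 + 2*b" using SX SX1 b by (intro abs_leI) (simp_all add: algebra_simps)
      thus ?thesis unfolding X_def by simp
    qed
  qed
qed


lemma psd2:
  fixes m11 m12 m22 y1 y2 :: real
  assumes tr: "m11 + m22 \<ge> 0" and dt: "m11*m22 - m12\<^sup>2 \<ge> 0"
  shows "m11*y1\<^sup>2 + 2*m12*y1*y2 + m22*y2\<^sup>2 \<ge> 0"
proof (cases "m11 > 0")
  case True
  have "m11*(m11*y1\<^sup>2 + 2*m12*y1*y2 + m22*y2\<^sup>2) = (m11*y1 + m12*y2)\<^sup>2 + (m11*m22 - m12\<^sup>2)*y2\<^sup>2"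
    by (simp add: power2_eq_square algebra_simps)
  also have "\<dots> \<ge> 0" using dt by simp
  finally show ?thesis using True by (simp add: zero_le_mult_iff)
next
  case False
  have "m12\<^sup>2 \<ge> 0" by simp
  hence "m11*m22 \<ge> 0" using dt by linarith
  hence m22: "m22 \<ge> 0" and m11: "m11 = 0"
    using False tr by (auto simp: zero_le_mult_iff)
  hence "m12 = 0" using dt by simp
  thus ?thesis using m22 m11 by simp
qed

lemma quad_bound:
  fixes P Q r e y1 y2 w1 w2 :: real
  assumes s: "w1 + w2 = P + Q" and p: "w1*w2 = P*Q - r\<^sup>2"
    and e1: "w1\<^sup>2 \<ge> e" and e2: "w2\<^sup>2 \<ge> e"
  shows "(P*y1 + r*y2)\<^sup>2 + (r*y1 + Q*y2)\<^sup>2 \<ge> e*(y1\<^sup>2 + y2\<^sup>2)"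
proof -
  define m11 where "m11 = P\<^sup>2 + r\<^sup>2 - e"
  define m22 where "m22 = Q\<^sup>2 + r\<^sup>2 - e"
  define m12 where "m12 = r*(P+Q)"
  have id: "(P*y1 + r*y2)\<^sup>2 + (r*y1 + Q*y2)\<^sup>2 - e*(y1\<^sup>2 + y2\<^sup>2) = m11*y1\<^sup>2 + 2*m12*y1*y2 + m22*y2\<^sup>2"
    unfolding m11_def m12_def m22_def by (simp add: power2_eq_square algebra_simps)
  have sq: "P\<^sup>2 + Q\<^sup>2 + 2*r\<^sup>2 = w1\<^sup>2 + w2\<^sup>2"
  proof -
    have "w1\<^sup>2 + w2\<^sup>2 = (w1+w2)\<^sup>2 - 2*(w1*w2)" by (simp add: power2_eq_square algebra_simps)
    also have "\<dots> = (P+Q)\<^sup>2 - 2*(P*Q - r\<^sup>2)" using s p by simp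
    finally show ?thesis by (simp add: power2_eq_square algebra_simps)
  qed
  have tr: "m11 + m22 \<ge> 0" unfolding m11_def m22_def using sq e1 e2 by linarith
  have "m11*m22 - m12\<^sup>2 = (P*Q - r\<^sup>2)\<^sup>2 - e*(P\<^sup>2 + Q\<^sup>2 + 2*r\<^sup>2) + e\<^sup>2"
    unfolding m11_def m12_def m22_def by (simp add: power2_eq_square algebra_simps)
  also have "\<dots> = (w1*w2)\<^sup>2 - e*(w1\<^sup>2 + w2\<^sup>2) + e\<^sup>2" using p sq by simp
  also have "\<dots> = (w1\<^sup>2 - e)*(w2\<^sup>2 - e)" by (simp add: power2_eq_square algebra_simps)
  also have "\<dots> \<ge> 0" using e1 e2 by simp
  finally have dt: "m11*m22 - m12\<^sup>2 \<ge> 0" .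
  show ?thesis using psd2[OF tr dt, of y1 y2] id by linarith
qed

lemma cplx_identity:
  fixes p q r :: real and z x1 x2 :: complex
  defines "P \<equiv> p - Re z" and "Q \<equiv> q - Re z" and "b \<equiv> Im z"
  shows "(cmod ((of_real p - z)*x1 + of_real r*x2))\<^sup>2 + (cmod (of_real r*x1 + (of_real q - z)*x2))\<^sup>2
    = ((P*Re x1 + r*Re x2)\<^sup>2 + (r*Re x1 + Q*Re x2)\<^sup>2) + ((P*Im x1 + r*Im x2)\<^sup>2 + (r*Im x1 + Q*Im x2)\<^sup>2)
      + b\<^sup>2 * ((cmod x1)\<^sup>2 + (cmod x2)\<^sup>2)"
  unfolding cmod_power2 P_def Q_def b_def
  by (simp add: power2_eq_square algebra_simps)

lemma block_bound:
  fixes p q r d w1 w2 :: real and z x1 x2 :: complex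
  assumes s: "w1 + w2 = p + q" and pr: "w1*w2 = p*q - r\<^sup>2"
    and d1: "cmod (of_real w1 - z) \<ge> d" and d2: "cmod (of_real w2 - z) \<ge> d" and d: "d \<ge> 0"
  shows "d\<^sup>2 * ((cmod x1)\<^sup>2 + (cmod x2)\<^sup>2) \<le>
     (cmod ((of_real p - z)*x1 + of_real r*x2))\<^sup>2 + (cmod (of_real r*x1 + (of_real q - z)*x2))\<^sup>2"
proof -
  define a where "a = Re z"
  define b where "b = Im z"
  define e where "e = d\<^sup>2 - b\<^sup>2"
  have e1: "(w1 - a)\<^sup>2 \<ge> e"
  proof -
    have "d\<^sup>2 \<le> (cmod (of_real w1 - z))\<^sup>2" using d1 d by (simp add: power_mono)
    also have "\<dots> = (w1 - a)\<^sup>2 + b\<^sup>2" unfolding cmod_power2 a_def b_def by simp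
    finally show ?thesis unfolding e_def by simp
  qed
  have e2: "(w2 - a)\<^sup>2 \<ge> e"
  proof -
    have "d\<^sup>2 \<le> (cmod (of_real w2 - z))\<^sup>2" using d2 d by (simp add: power_mono)
    also have "\<dots> = (w2 - a)\<^sup>2 + b\<^sup>2" unfolding cmod_power2 a_def b_def by simp
    finally show ?thesis unfolding e_def by simp
  qed
  have s': "(w1 - a) + (w2 - a) = (p - a) + (q - a)" using s by simp
  have p': "(w1 - a)*(w2 - a) = (p - a)*(q - a) - r\<^sup>2"
  proof -
    have "(w1 - a)*(w2 - a) = w1*w2 - a*(w1+w2) + a\<^sup>2" by (simp add: power2_eq_square algebra_simps)
    also have "\<dots> = (p*q - r\<^sup>2) - a*(p+q) + a\<^sup>2" using s pr by simp
    finally show ?thesis by (simp add: power2_eq_square algebra_simps)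
  qed
  note qb = quad_bound[OF s' p' e1 e2]
  have A: "((p-a)*Re x1 + r*Re x2)\<^sup>2 + (r*Re x1 + (q-a)*Re x2)\<^sup>2 \<ge> e*((Re x1)\<^sup>2 + (Re x2)\<^sup>2)" by (rule qb)
  have B: "((p-a)*Im x1 + r*Im x2)\<^sup>2 + (r*Im x1 + (q-a)*Im x2)\<^sup>2 \<ge> e*((Im x1)\<^sup>2 + (Im x2)\<^sup>2)" by (rule qb)
  have "d\<^sup>2 * ((cmod x1)\<^sup>2 + (cmod x2)\<^sup>2) = e*((Re x1)\<^sup>2 + (Re x2)\<^sup>2) + e*((Im x1)\<^sup>2 + (Im x2)\<^sup>2) + b\<^sup>2 * ((cmod x1)\<^sup>2 + (cmod x2)\<^sup>2)"
    unfolding e_def cmod_power2 by (simp add: algebra_simps)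
  also have "\<dots> \<le> (((p-a)*Re x1 + r*Re x2)\<^sup>2 + (r*Re x1 + (q-a)*Re x2)\<^sup>2) + (((p-a)*Im x1 + r*Im x2)\<^sup>2 + (r*Im x1 + (q-a)*Im x2)\<^sup>2)
      + b\<^sup>2 * ((cmod x1)\<^sup>2 + (cmod x2)\<^sup>2)" using A B by linarith
  also have "\<dots> = (cmod ((of_real p - z)*x1 + of_real r*x2))\<^sup>2 + (cmod (of_real r*x1 + (of_real q - z)*x2))\<^sup>2"
    unfolding a_def b_def by (rule cplx_identity[symmetric])
  finally show ?thesis .
qed

definition mup :: "real \<Rightarrow> real \<Rightarrow> real \<Rightarrow> real" where
  "mup p q r = (p + q + sqrt ((p - q)\<^sup>2 + 4*r\<^sup>2))/2"
definition mum :: "real \<Rightarrow> real \<Rightarrow> real \<Rightarrow> real" where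
  "mum p q r = (p + q - sqrt ((p - q)\<^sup>2 + 4*r\<^sup>2))/2"

lemma mu_sum: "mup p q r + mum p q r = p + q"
  unfolding mup_def mum_def by (simp add: field_simps)

lemma mu_prod: "mup p q r * mum p q r = p*q - r\<^sup>2"
proof -
  have sq: "(sqrt ((p - q)\<^sup>2 + 4*r\<^sup>2))\<^sup>2 = (p - q)\<^sup>2 + 4*r\<^sup>2" by simp
  have "mup p q r * mum p q r = ((p+q)\<^sup>2 - (sqrt ((p - q)\<^sup>2 + 4*r\<^sup>2))\<^sup>2)/4"
    unfolding mup_def mum_def by (simp add: power2_eq_square algebra_simps)
  also have "\<dots> = p*q - r\<^sup>2" unfolding sq by (simp add: power2_eq_square field_simps)
  finally show ?thesis .
qed

lemma char_factor:
  fixes p q r :: real and z :: complex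
  shows "(of_real p - z)*(of_real q - z) - (of_real r)\<^sup>2 = (of_real (mup p q r) - z)*(of_real (mum p q r) - z)"
proof -
  have s: "complex_of_real (mup p q r) + of_real (mum p q r) = of_real p + of_real q"
    using mu_sum[of p q r] by (metis of_real_add)
  have pr: "complex_of_real (mup p q r) * of_real (mum p q r) = of_real p * of_real q - (of_real r)\<^sup>2"
    using mu_prod[of p q r] by (metis of_real_mult of_real_diff of_real_power)
  have "(of_real (mup p q r) - z)*(of_real (mum p q r) - z)
     = of_real (mup p q r) * of_real (mum p q r) - z*(of_real (mup p q r) + of_real (mum p q r)) + z*z"
    by (simp add: algebra_simps)
  also have "\<dots> = (of_real p - z)*(of_real q - z) - (of_real r)\<^sup>2" unfolding s pr by (simp add: algebra_simps)
  finally show ?thesis by simp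
qed

lemma block_kernel:
  fixes p q r :: real and z x1 x2 :: complex
  assumes e1: "(of_real p - z)*x1 + of_real r*x2 = 0" and e2: "of_real r*x1 + (of_real q - z)*x2 = 0"
    and nz: "x1 \<noteq> 0 \<or> x2 \<noteq> 0"
  shows "z = of_real (mup p q r) \<or> z = of_real (mum p q r)"
proof -
  define D where "D = (of_real p - z)*(of_real q - z) - (of_real r)\<^sup>2"
  have "D*x1 = (of_real q - z)*((of_real p - z)*x1 + of_real r*x2) - of_real r*(of_real r*x1 + (of_real q - z)*x2)"
    unfolding D_def by (simp add: power2_eq_square algebra_simps)
  hence 1: "D*x1 = 0" using e1 e2 by simp
  have "D*x2 = (of_real p - z)*(of_real r*x1 + (of_real q - z)*x2) - of_real r*((of_real p - z)*x1 + of_real r*x2)"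
    unfolding D_def by (simp add: power2_eq_square algebra_simps)
  hence 2: "D*x2 = 0" using e1 e2 by simp
  have "D = 0" using 1 2 nz by auto
  hence "(of_real (mup p q r) - z)*(of_real (mum p q r) - z) = 0" unfolding D_def char_factor .
  thus ?thesis by auto
qed

lemma block_solve:
  fixes p q r :: real and z g1 g2 :: complex
  assumes nz1: "z \<noteq> of_real (mup p q r)" and nz2: "z \<noteq> of_real (mum p q r)"
  shows "\<exists>x1 x2. (of_real p - z)*x1 + of_real r*x2 = g1 \<and> of_real r*x1 + (of_real q - z)*x2 = g2"
proof -
  define D where "D = (of_real p - z)*(of_real q - z) - (of_real r)\<^sup>2"
  have "D \<noteq> 0" unfolding D_def char_factor using nz1 nz2 by auto
  define x1 where "x1 = ((of_real q - z)*g1 - of_real r*g2)/D"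
  define x2 where "x2 = ((of_real p - z)*g2 - of_real r*g1)/D"
  have "(of_real p - z)*x1 + of_real r*x2 = g1"
    using \<open>D \<noteq> 0\<close> unfolding x1_def x2_def
    by (simp add: field_simps) (simp add: D_def power2_eq_square algebra_simps)
  moreover have "of_real r*x1 + (of_real q - z)*x2 = g2"
    using \<open>D \<noteq> 0\<close> unfolding x1_def x2_def
    by (simp add: field_simps) (simp add: D_def power2_eq_square algebra_simps)
  ultimately show ?thesis by blast
qed

lemma block_eigvec:
  fixes p q r :: real
  assumes "mu = mup p q r \<or> mu = mum p q r"
  shows "(p - mu)*r + r*(mu - p) = 0 \<and> r*r + (q - mu)*(mu - p) = 0"
proof -
  have "(mu - mup p q r)*(mu - mum p q r) = 0" using assms by auto
  moreover have "(mu - mup p q r)*(mu - mum p q r) = mu*mu - mu*(mup p q r + mum p q r) + mup p q r * mum p q r"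
    by (simp add: algebra_simps)
  ultimately have "mu*mu - mu*(p+q) + (p*q - r\<^sup>2) = 0" unfolding mu_sum mu_prod by simp
  thus ?thesis by (simp add: power2_eq_square algebra_simps)
qed


lemma sum_pairs: "sum a {..<2*n} = (\<Sum>m<n. a(2*m) + a(2*m+1))" for a :: "nat \<Rightarrow> real"
  by (induction n) (simp_all add: lessThan_Suc)

lemma group_sums:
  fixes a :: "nat \<Rightarrow> real"
  assumes "summable a"
  shows "summable (\<lambda>m. a(2*m) + a(2*m+1)) \<and> suminf (\<lambda>m. a(2*m) + a(2*m+1)) = suminf a"
proof -
  have "(\<lambda>n. sum a {n*2..<n*2+2}) sums suminf a" by (rule sums_group) (use assms in \<open>simp_all add: summable_sums\<close>)
  moreover have "\<And>n. sum a {n*2..<n*2+2} = a(2*n) + a(2*n+1)"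
    by (simp add: numeral_2_eq_2 mult.commute)
  ultimately have "(\<lambda>m. a(2*m) + a(2*m+1)) sums suminf a" by simp
  thus ?thesis by (simp add: sums_iff)
qed

lemma ungroup:
  fixes a :: "nat \<Rightarrow> real"
  assumes nn: "\<And>n. a n \<ge> 0" and s: "summable (\<lambda>m. a(2*m) + a(2*m+1))"
  shows "summable a"
proof (rule summableI_nonneg_bounded[OF nn])
  fix n
  have "sum a {..<n} \<le> sum a {..<2*n}" by (rule sum_mono2) (use nn in auto)
  also have "\<dots> = (\<Sum>m<n. a(2*m) + a(2*m+1))" by (rule sum_pairs)
  also have "\<dots> \<le> suminf (\<lambda>m. a(2*m) + a(2*m+1))"
    by (rule sum_le_suminf[OF s]) (use nn in auto)
  finally show "sum a {..<n} \<le> suminf (\<lambda>m. a(2*m) + a(2*m+1))" .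
qed

lemma block_sum0:
  fixes a b :: "nat \<Rightarrow> real" and K :: real
  assumes K: "K > 0" and an: "\<And>n. a n \<ge> 0" and bn: "\<And>n. b n \<ge> 0" and sb: "summable b"
    and blk: "\<And>m. K*(a(2*m) + a(2*m+1)) \<le> b(2*m) + b(2*m+1)"
  shows "summable a \<and> K * suminf a \<le> suminf b"
proof -
  define A where "A = (\<lambda>m. a(2*m) + a(2*m+1))"
  define B where "B = (\<lambda>m. b(2*m) + b(2*m+1))"
  have gB: "summable B" "suminf B = suminf b" using group_sums[OF sb] B_def by auto
  have AB: "A m \<le> B m / K" for m using blk[of m] K unfolding A_def B_def by (simp add: field_simps)
  have An: "A m \<ge> 0" for m using an unfolding A_def by (simp add: add_nonneg_nonneg)
  have sBK: "summable (\<lambda>m. B m / K)" using gB(1) by (rule summable_divide)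
  have sA: "summable A" by (rule summable_comparison_test'[OF sBK]) (use An AB in auto)
  have sa: "summable a" by (rule ungroup[OF an]) (use sA A_def in simp)
  have "suminf a = suminf A" using group_sums[OF sa] A_def by simp
  also have "\<dots> \<le> suminf (\<lambda>m. B m / K)" by (rule suminf_le[OF AB sA sBK])
  also have "\<dots> = suminf B / K" by (rule suminf_divide[OF gB(1)])
  finally have "suminf a \<le> suminf b / K" using gB by simp
  thus ?thesis using sa K by (simp add: field_simps)
qed

lemma block_sum:
  fixes a b :: "nat \<Rightarrow> real" and K :: real and s :: nat
  assumes K: "K > 0" and an: "\<And>n. a n \<ge> 0" and bn: "\<And>n. b n \<ge> 0" and sb: "summable b"
    and s: "s = 0 \<or> s = 1" and a0: "s = 1 \<Longrightarrow> a 0 = 0"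
    and blk: "\<And>m. K*(a(2*m+s) + a(2*m+s+1)) \<le> b(2*m+s) + b(2*m+s+1)"
  shows "summable a \<and> K * suminf a \<le> suminf b"
  using s
proof
  assume "s = 0" thus ?thesis using block_sum0[OF K an bn sb] blk by simp
next
  assume s1: "s = 1"
  have sb': "summable (\<lambda>n. b (Suc n))" using sb by (simp add: summable_Suc_iff)
  have r: "summable (\<lambda>n. a (Suc n)) \<and> K * suminf (\<lambda>n. a (Suc n)) \<le> suminf (\<lambda>n. b (Suc n))"
    by (rule block_sum0[OF K _ _ sb']) (use an bn blk s1 in auto)
  have sa: "summable a" using r by (simp add: summable_Suc_iff)
  have "suminf (\<lambda>n. a (Suc n)) = suminf a" using suminf_split_head[OF sa] a0 s1 by simp
  moreover have "suminf (\<lambda>n. b (Suc n)) \<le> suminf b" using suminf_split_head[OF sb] bn[of 0] by simp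
  ultimately show ?thesis using r sa by simp
qed

lemma cmod_add_sq: "(cmod (x + y))\<^sup>2 \<le> 2*(cmod x)\<^sup>2 + 2*(cmod y)\<^sup>2"
proof -
  have "(cmod (x + y))\<^sup>2 \<le> (cmod x + cmod y)\<^sup>2" by (rule power_mono[OF norm_triangle_ineq]) simp
  also have "\<dots> \<le> 2*(cmod x)\<^sup>2 + 2*(cmod y)\<^sup>2"
    using sum_squares_ge_zero[of "cmod x - cmod y" 0] by (simp add: power2_eq_square algebra_simps)
  finally show ?thesis .
qed

lemma ell2_lin:
  assumes u: "u \<in> ell2" and v: "v \<in> ell2"
  shows "(\<lambda>n. u n + w * v n) \<in> ell2"
proof -
  have su: "summable (\<lambda>n. (cmod (u n))\<^sup>2)" and sv: "summable (\<lambda>n. (cmod (v n))\<^sup>2)"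
    using u v by (auto simp: ell2_def)
  have "summable (\<lambda>n. 2*(cmod (u n))\<^sup>2 + 2*(cmod w)\<^sup>2*(cmod (v n))\<^sup>2)"
    using su sv by (intro summable_add summable_mult) auto
  hence "summable (\<lambda>n. (cmod (u n + w * v n))\<^sup>2)"
  proof (rule summable_comparison_test'[where N=0])
    fix n
    have "(cmod (u n + w * v n))\<^sup>2 \<le> 2*(cmod (u n))\<^sup>2 + 2*(cmod (w * v n))\<^sup>2" by (rule cmod_add_sq)
    also have "\<dots> = 2*(cmod (u n))\<^sup>2 + 2*(cmod w)\<^sup>2*(cmod (v n))\<^sup>2" by (simp add: norm_mult power_mult_distrib)
    finally show "norm ((cmod (u n + w * v n))\<^sup>2) \<le> 2*(cmod (u n))\<^sup>2 + 2*(cmod w)\<^sup>2*(cmod (v n))\<^sup>2" by simp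
  qed
  thus ?thesis using u v by (simp add: ell2_def)
qed

lemma ell2_scale:
  assumes u: "u \<in> ell2" shows "(\<lambda>n. w * u n) \<in> ell2"
proof -
  have z: "(\<lambda>_. 0) \<in> ell2" by (simp add: ell2_def)
  show ?thesis using ell2_lin[OF z u, of w] by simp
qed

lemma l2norm_scale:
  assumes u: "u \<in> ell2" shows "l2norm (\<lambda>n. w * u n) = cmod w * l2norm u"
proof -
  have su: "summable (\<lambda>n. (cmod (u n))\<^sup>2)" using u by (auto simp: ell2_def)
  have "(\<Sum>n. (cmod (w * u n))\<^sup>2) = (\<Sum>n. (cmod w)\<^sup>2 * (cmod (u n))\<^sup>2)"
    by (simp add: norm_mult power_mult_distrib)
  also have "\<dots> = (cmod w)\<^sup>2 * (\<Sum>n. (cmod (u n))\<^sup>2)" by (rule suminf_mult[OF su])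
  finally show ?thesis unfolding l2norm_def by (simp add: real_sqrt_mult)
qed

lemma l2norm_pos:
  assumes u: "u \<in> ell2" and nz: "u \<noteq> (\<lambda>_. 0)" shows "l2norm u > 0"
proof -
  have su: "summable (\<lambda>n. (cmod (u n))\<^sup>2)" using u by (auto simp: ell2_def)
  obtain n where "u n \<noteq> 0" using nz by auto
  hence "\<exists>i. 0 < (cmod (u i))\<^sup>2" by auto
  hence "0 < (\<Sum>n. (cmod (u n))\<^sup>2)" using suminf_pos_iff[OF su] by simp
  thus ?thesis unfolding l2norm_def by simp
qed

lemma l2norm_nonneg: "u \<in> ell2 \<Longrightarrow> l2norm u \<ge> 0" unfolding l2norm_def ell2_def
  by (auto intro!: suminf_nonneg)


lemma Jop0: "Jop c1 c2 u 0 = 0" by (simp add: Jop_def)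

locale blk =
  fixes c1 c2 :: real and s :: nat and p q r :: "nat \<Rightarrow> real"
  assumes Hs: "s = 0 \<or> s = 1"
  and HJ1: "\<And>u m. Jop c1 c2 u (2*m+s) = of_real (p m) * u (2*m+s) + of_real (r m) * u (2*m+s+1)"
  and HJ2: "\<And>u m. Jop c1 c2 u (2*m+s+1) = of_real (r m) * u (2*m+s) + of_real (q m) * u (2*m+s+1)"
begin

lemma idx: "s \<le> n \<Longrightarrow> n = 2*((n-s) div 2) + s \<or> n = 2*((n-s) div 2) + s + 1"
  by presburger

lemma T1: "Jop c1 c2 u (2*m+s) - z * u(2*m+s) = (of_real (p m) - z) * u(2*m+s) + of_real (r m) * u(2*m+s+1)"
  by (subst HJ1) (simp add: algebra_simps)
lemma T2: "Jop c1 c2 u (2*m+s+1) - z * u(2*m+s+1) = of_real (r m) * u(2*m+s) + (of_real (q m) - z) * u(2*m+s+1)"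
  by (subst HJ2) (simp add: algebra_simps)

lemma ell2_0: "u \<in> ell2 \<Longrightarrow> u 0 = 0" by (simp add: ell2_def)

lemma resolvent:
  fixes z :: complex and d :: real
  assumes d: "d > 0"
  and BB: "\<And>m x1 x2. (2*m+s = 0 \<Longrightarrow> x1 = 0) \<Longrightarrow> d\<^sup>2*((cmod x1)\<^sup>2+(cmod x2)\<^sup>2) \<le>
     (cmod ((of_real (p m) - z)*x1 + of_real (r m)*x2))\<^sup>2 + (cmod (of_real (r m)*x1 + (of_real (q m) - z)*x2))\<^sup>2"
  and BS: "\<And>m g1 g2. (2*m+s = 0 \<Longrightarrow> g1 = 0) \<Longrightarrow> \<exists>x1 x2. (2*m+s = 0 \<longrightarrow> x1 = 0) \<and>
     (of_real (p m) - z)*x1 + of_real (r m)*x2 = g1 \<and> of_real (r m)*x1 + (of_real (q m) - z)*x2 = g2"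
  shows "z \<in> resolvent_set_J c1 c2"
proof -
  define T where "T = (\<lambda>u n. Jop c1 c2 u n - z * u n)"
  have s1: "s \<le> 1" using Hs by auto
  have Tell: "T u \<in> ell2" if "u \<in> domJ c1 c2" for u
  proof -
    have "u \<in> ell2" "Jop c1 c2 u \<in> ell2" using that by (auto simp: domJ_def)
    from ell2_lin[OF this(2,1), of "-z"] show ?thesis unfolding T_def by simp
  qed
  have TB1: "T u (2*m+s) = (of_real (p m) - z) * u(2*m+s) + of_real (r m) * u(2*m+s+1)" for u m
    unfolding T_def by (rule T1)
  have TB2: "T u (2*m+s+1) = of_real (r m) * u(2*m+s) + (of_real (q m) - z) * u(2*m+s+1)" for u m
    unfolding T_def by (rule T2)
  have bound: "l2norm u \<le> (1/d) * l2norm (T u)" if u: "u \<in> domJ c1 c2" for u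
  proof -
    have ue: "u \<in> ell2" using u by (simp add: domJ_def)
    have u0: "u 0 = 0" using ue by (simp add: ell2_def)
    have sb: "summable (\<lambda>n. (cmod (T u n))\<^sup>2)" using Tell[OF u] by (simp add: ell2_def)
    have r: "summable (\<lambda>n. (cmod (u n))\<^sup>2) \<and> d\<^sup>2 * (\<Sum>n. (cmod (u n))\<^sup>2) \<le> (\<Sum>n. (cmod (T u n))\<^sup>2)"
    proof (rule block_sum[OF _ _ _ sb Hs])
      show "0 < d\<^sup>2" using d by simp
      fix m
      have "d\<^sup>2*((cmod (u (2*m+s)))\<^sup>2+(cmod (u (2*m+s+1)))\<^sup>2) \<le>
        (cmod ((of_real (p m) - z)*u (2*m+s) + of_real (r m)*u (2*m+s+1)))\<^sup>2 +
        (cmod (of_real (r m)*u (2*m+s) + (of_real (q m) - z)*u (2*m+s+1)))\<^sup>2"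
        by (rule BB) (use u0 in simp)
      thus "d\<^sup>2*((cmod (u (2*m+s)))\<^sup>2+(cmod (u (2*m+s+1)))\<^sup>2) \<le>
        (cmod (T u (2*m+s)))\<^sup>2 + (cmod (T u (2*m+s+1)))\<^sup>2" unfolding TB1 TB2 .
    qed (use u0 in auto)
    have "sqrt (d\<^sup>2 * (\<Sum>n. (cmod (u n))\<^sup>2)) \<le> sqrt (\<Sum>n. (cmod (T u n))\<^sup>2)"
      using r by (simp add: real_sqrt_le_mono)
    hence "d * l2norm u \<le> l2norm (T u)" unfolding l2norm_def using d by (simp add: real_sqrt_mult)
    thus ?thesis using d by (simp add: field_simps)
  qed
  have inj: "inj_on T (domJ c1 c2)"
  proof (rule inj_onI)
    fix u v assume u: "u \<in> domJ c1 c2" and v: "v \<in> domJ c1 c2" and eq: "T u = T v"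
    have u0: "u 0 = 0" and v0: "v 0 = 0" using u v by (auto simp: domJ_def ell2_def)
    have blk0: "u (2*m+s) = v (2*m+s) \<and> u (2*m+s+1) = v (2*m+s+1)" for m
    proof -
      define x1 where "x1 = u (2*m+s) - v (2*m+s)"
      define x2 where "x2 = u (2*m+s+1) - v (2*m+s+1)"
      have e1: "(of_real (p m) - z)*x1 + of_real (r m)*x2 = T u (2*m+s) - T v (2*m+s)"
        unfolding TB1 x1_def x2_def by (simp add: algebra_simps)
      have e2: "of_real (r m)*x1 + (of_real (q m) - z)*x2 = T u (2*m+s+1) - T v (2*m+s+1)"
        unfolding TB2 x1_def x2_def by (simp add: algebra_simps)
      have "d\<^sup>2*((cmod x1)\<^sup>2+(cmod x2)\<^sup>2) \<le> 0"
        using BB[of m x1 x2] e1 e2 eq u0 v0 unfolding x1_def by simp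
      hence "(cmod x1)\<^sup>2+(cmod x2)\<^sup>2 \<le> 0" using d by (simp add: mult_le_0_iff)
      moreover have "(cmod x1)\<^sup>2 \<ge> 0" "(cmod x2)\<^sup>2 \<ge> 0" by simp_all
      ultimately have "(cmod x1)\<^sup>2 = 0" "(cmod x2)\<^sup>2 = 0" by linarith+
      hence "x1 = 0" "x2 = 0" by simp_all
      thus ?thesis unfolding x1_def x2_def by simp
    qed
    show "u = v"
    proof
      fix n
      show "u n = v n"
      proof (cases "s \<le> n")
        case True
        from idx[OF True] blk0[of "(n-s) div 2"] show ?thesis by auto
      next
        case False
        hence "n = 0" using s1 by simp
        thus ?thesis using u0 v0 by simp
      qed
    qed
  qed
  have img: "T ` domJ c1 c2 = ell2"
  proof
    show "T ` domJ c1 c2 \<subseteq> ell2" using Tell by auto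
  next
    show "ell2 \<subseteq> T ` domJ c1 c2"
    proof
      fix f assume f: "f \<in> ell2"
      have f0: "f 0 = 0" using f by (simp add: ell2_def)
      have "\<forall>m. \<exists>x. (2*m+s = 0 \<longrightarrow> fst x = 0) \<and>
         (of_real (p m) - z)* fst x + of_real (r m)* snd x = f (2*m+s) \<and>
         of_real (r m)* fst x + (of_real (q m) - z)* snd x = f (2*m+s+1)"
      proof
        fix m
        from BS[of m "f (2*m+s)" "f (2*m+s+1)"] f0 obtain x1 x2 where
          "(2*m+s = 0 \<longrightarrow> x1 = 0) \<and>
           (of_real (p m) - z)*x1 + of_real (r m)*x2 = f (2*m+s) \<and> of_real (r m)*x1 + (of_real (q m) - z)*x2 = f (2*m+s+1)"
          by auto
        thus "\<exists>x. (2*m+s = 0 \<longrightarrow> fst x = 0) \<and>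
         (of_real (p m) - z)* fst x + of_real (r m)* snd x = f (2*m+s) \<and>
         of_real (r m)* fst x + (of_real (q m) - z)* snd x = f (2*m+s+1)" by (intro exI[of _ "(x1,x2)"]) simp
      qed
      then obtain X where X: "\<And>m. (2*m+s = 0 \<longrightarrow> fst (X m) = 0) \<and>
         (of_real (p m) - z)* fst (X m) + of_real (r m)* snd (X m) = f (2*m+s) \<and>
         of_real (r m)* fst (X m) + (of_real (q m) - z)* snd (X m) = f (2*m+s+1)"
        by metis
      define u where "u n = (if n < s then 0 else if even (n - s) then fst (X ((n-s) div 2)) else snd (X ((n-s) div 2)))" for n
      have u1: "u (2*m+s) = fst (X m)" for m by (simp add: u_def)
      have u2: "u (2*m+s+1) = snd (X m)" for m by (simp add: u_def)
      have u0: "u 0 = 0"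
        using Hs
      proof
        assume "s = 0" thus ?thesis using u1[of 0] X[of 0] by simp
      next
        assume "s = 1" thus ?thesis by (simp add: u_def)
      qed
      have Tu: "T u = f"
      proof
        fix n
        show "T u n = f n"
        proof (cases "s \<le> n")
          case True
          from idx[OF True] show ?thesis
          proof
            assume n: "n = 2 * ((n - s) div 2) + s"
            show ?thesis by (subst n, subst n, unfold TB1 u1 u2) (use X in simp)
          next
            assume n: "n = 2 * ((n - s) div 2) + s + 1"
            show ?thesis by (subst n, subst n, unfold TB2 u1 u2) (use X in simp)
          qed
        next
          case False
          hence "n = 0" using s1 by simp
          thus ?thesis using u0 f0 by (simp add: T_def Jop0)
        qed
      qed
      have sb: "summable (\<lambda>n. (cmod (f n))\<^sup>2)" using f by (simp add: ell2_def)
      have r: "summable (\<lambda>n. (cmod (u n))\<^sup>2) \<and> d\<^sup>2 * (\<Sum>n. (cmod (u n))\<^sup>2) \<le> (\<Sum>n. (cmod (f n))\<^sup>2)"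
      proof (rule block_sum[OF _ _ _ sb Hs])
        show "0 < d\<^sup>2" using d by simp
        fix m
        have "d\<^sup>2*((cmod (u (2*m+s)))\<^sup>2+(cmod (u (2*m+s+1)))\<^sup>2) \<le>
          (cmod ((of_real (p m) - z)*u (2*m+s) + of_real (r m)*u (2*m+s+1)))\<^sup>2 +
          (cmod (of_real (r m)*u (2*m+s) + (of_real (q m) - z)*u (2*m+s+1)))\<^sup>2"
          by (rule BB) (use u0 in simp)
        thus "d\<^sup>2*((cmod (u (2*m+s)))\<^sup>2+(cmod (u (2*m+s+1)))\<^sup>2) \<le>
          (cmod (f (2*m+s)))\<^sup>2 + (cmod (f (2*m+s+1)))\<^sup>2" unfolding u1 u2 using X[of m] by simp
      qed (use u0 in auto)
      have ue: "u \<in> ell2" using r u0 by (simp add: ell2_def)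
      have "Jop c1 c2 u = (\<lambda>n. f n + z * u n)"
      proof
        fix n
        have "T u n = f n" using Tu by simp
        thus "Jop c1 c2 u n = f n + z * u n" unfolding T_def by (simp add: algebra_simps)
      qed
      hence "Jop c1 c2 u \<in> ell2" using ell2_lin[OF f ue] by simp
      hence "u \<in> domJ c1 c2" using ue by (simp add: domJ_def)
      thus "f \<in> T ` domJ c1 c2" using Tu by (metis image_eqI)
    qed
  qed
  show ?thesis unfolding resolvent_set_J_def
    using inj img bound unfolding T_def bij_betw_def by blast
qed

lemma eig_sub:
  assumes "z \<in> eigenvalues_J c1 c2"
  shows "\<exists>m x1 x2. (2*m+s = 0 \<longrightarrow> x1 = 0) \<and> (x1 \<noteq> 0 \<or> x2 \<noteq> 0) \<and>
    (of_real (p m) - z)*x1 + of_real (r m)*x2 = 0 \<and> of_real (r m)*x1 + (of_real (q m) - z)*x2 = 0"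
proof -
  obtain u where u: "u \<in> domJ c1 c2" "u \<noteq> (\<lambda>_. 0)" "Jop c1 c2 u = (\<lambda>n. z * u n)"
    using assms by (auto simp: eigenvalues_J_def)
  have u0: "u 0 = 0" using u(1) by (simp add: domJ_def ell2_def)
  obtain n where n: "u n \<noteq> 0" using u(2) by auto
  have "n \<noteq> 0"
  proof
    assume "n = 0" thus False using n u0 by simp
  qed
  hence sn: "s \<le> n" using Hs by auto
  define m where "m = (n - s) div 2"
  have e: "Jop c1 c2 u k - z * u k = 0" for k using u(3) by (simp add: fun_eq_iff)
  show ?thesis
  proof (intro exI conjI)
    show "2*m+s = 0 \<longrightarrow> u (2*m+s) = 0" using u0 by auto
    show "u (2*m+s) \<noteq> 0 \<or> u (2*m+s+1) \<noteq> 0" using idx[OF sn] n m_def by auto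
    show "(of_real (p m) - z)*u (2*m+s) + of_real (r m)*u (2*m+s+1) = 0" using T1[of u m z] e by simp
    show "of_real (r m)*u (2*m+s) + (of_real (q m) - z)*u (2*m+s+1) = 0" using T2[of u m z] e by simp
  qed
qed

lemma eig_sup:
  assumes c: "2*m+s = 0 \<longrightarrow> x1 = 0" and nz: "x1 \<noteq> 0 \<or> x2 \<noteq> 0"
    and e1: "(of_real (p m) - z)*x1 + of_real (r m)*x2 = 0"
    and e2: "of_real (r m)*x1 + (of_real (q m) - z)*x2 = 0"
  shows "z \<in> eigenvalues_J c1 c2"
proof -
  define u where "u n = (if n = 2*m+s then x1 else if n = 2*m+s+1 then x2 else 0)" for n
  have u0: "u 0 = 0" using c by (auto simp: u_def)
  have "summable (\<lambda>n. (cmod (u n))\<^sup>2)"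
    by (rule summable_finite[of "{2*m+s, 2*m+s+1}"]) (auto simp: u_def)
  hence ue: "u \<in> ell2" using u0 by (simp add: ell2_def)
  have unz: "u \<noteq> (\<lambda>_. 0)"
  proof
    assume "u = (\<lambda>_. 0)"
    hence "u (2*m+s) = 0" "u (2*m+s+1) = 0" by simp_all
    thus False using nz by (simp add: u_def)
  qed
  have J: "Jop c1 c2 u = (\<lambda>n. z * u n)"
  proof
    fix n
    show "Jop c1 c2 u n = z * u n"
    proof (cases "s \<le> n")
      case False
      hence "n = 0" using Hs by auto
      thus ?thesis using u0 by (simp add: Jop0)
    next
      case True
      define m' where "m' = (n - s) div 2"
      show ?thesis
      proof (cases "m' = m")
        case True
        have a: "u (2*m+s) = x1" "u (2*m+s+1) = x2" by (simp_all add: u_def)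
        have b1: "Jop c1 c2 u (2*m+s) = z * u (2*m+s)" using T1[of u m z] e1 a by (simp add: algebra_simps)
        have b2: "Jop c1 c2 u (2*m+s+1) = z * u (2*m+s+1)" using T2[of u m z] e2 a by (simp add: algebra_simps)
        show ?thesis using idx[OF \<open>s \<le> n\<close>] b1 b2 True m'_def by auto
      next
        case False
        have a: "u (2*m'+s) = 0" "u (2*m'+s+1) = 0" using False by (auto simp: u_def)
        have b1: "Jop c1 c2 u (2*m'+s) = 0" "Jop c1 c2 u (2*m'+s+1) = 0" by (simp_all only: HJ1 HJ2 a) simp_all
        show ?thesis using idx[OF \<open>s \<le> n\<close>] a b1 m'_def by auto
      qed
    qed
  qed
  have "Jop c1 c2 u \<in> ell2" unfolding J by (rule ell2_scale[OF ue])
  hence "u \<in> domJ c1 c2" using ue by (simp add: domJ_def)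
  thus ?thesis using unz J by (auto simp: eigenvalues_J_def)
qed

end


lemma eigvec_c:
  fixes p q r mu :: real
  assumes "mu = mup p q r \<or> mu = mum p q r"
  shows "(of_real p - of_real mu)* of_real r + of_real r * of_real (mu - p) = (0::complex)"
    and "of_real r * of_real r + (of_real q - of_real mu) * of_real (mu - p) = (0::complex)"
proof -
  note b = block_eigvec[OF assms]
  have "complex_of_real ((p - mu)*r + r*(mu - p)) = 0" using b by simp
  thus "(of_real p - of_real mu)* of_real r + of_real r * of_real (mu - p) = (0::complex)"
    by (simp only: of_real_add of_real_mult of_real_diff)
  have "complex_of_real (r*r + (q - mu)*(mu - p)) = 0" using b by simp
  thus "of_real r * of_real r + (of_real q - of_real mu) * of_real (mu - p) = (0::complex)"
    by (simp only: of_real_add of_real_mult of_real_diff)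
qed

context blk
begin

lemma eig_mu:
  assumes "r m \<noteq> 0" and "2*m+s \<noteq> 0" and "mu = mup (p m) (q m) (r m) \<or> mu = mum (p m) (q m) (r m)"
  shows "complex_of_real mu \<in> eigenvalues_J c1 c2"
  by (rule eig_sup[of m "of_real (r m)" "of_real (mu - p m)"]) (use assms eigvec_c[OF assms(3)] in auto)

lemma eig_kernel:
  assumes "z \<in> eigenvalues_J c1 c2"
  shows "\<exists>m x1 x2. (2*m+s = 0 \<longrightarrow> x1 = 0) \<and> (x1 \<noteq> 0 \<or> x2 \<noteq> 0) \<and>
    (of_real (p m) - z)*x1 + of_real (r m)*x2 = 0 \<and> of_real (r m)*x1 + (of_real (q m) - z)*x2 = 0 \<and>
    (z = of_real (mup (p m) (q m) (r m)) \<or> z = of_real (mum (p m) (q m) (r m)))"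
proof -
  from eig_sub[OF assms] obtain m x1 x2 where h: "2*m+s = 0 \<longrightarrow> x1 = 0" "x1 \<noteq> 0 \<or> x2 \<noteq> 0"
    "(of_real (p m) - z) * x1 + of_real (r m) * x2 = 0" "of_real (r m) * x1 + (of_real (q m) - z) * x2 = 0"
    by (elim exE conjE) 
  have k: "z = of_real (mup (p m) (q m) (r m)) \<or> z = of_real (mum (p m) (q m) (r m))"
    by (rule block_kernel[OF h(3,4,2)])
  show ?thesis
    by (rule exI[of _ m], rule exI[of _ x1], rule exI[of _ x2]) (intro conjI h k)
qed

end

lemma closure_sub_spectrum: "closure (eigenvalues_J c1 c2) \<subseteq> spectrum_J c1 c2"
proof
  fix z assume z: "z \<in> closure (eigenvalues_J c1 c2)"
  show "z \<in> spectrum_J c1 c2" unfolding spectrum_J_def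
  proof
    show "z \<in> UNIV" by simp
  next
    show "z \<notin> resolvent_set_J c1 c2"
    proof
    assume "z \<in> resolvent_set_J c1 c2"
    then obtain C where C: "\<And>u. u \<in> domJ c1 c2 \<Longrightarrow> l2norm u \<le> C * l2norm (\<lambda>n. Jop c1 c2 u n - z * u n)"
      unfolding resolvent_set_J_def by blast
    have "1/(\<bar>C\<bar>+1) > 0" by simp
    then obtain mu where mu: "mu \<in> eigenvalues_J c1 c2" "dist mu z < 1/(\<bar>C\<bar>+1)"
      using z unfolding closure_approachable by blast
    obtain u where u: "u \<in> domJ c1 c2" "u \<noteq> (\<lambda>_. 0)" "Jop c1 c2 u = (\<lambda>n. mu * u n)"
      using mu(1) by (auto simp: eigenvalues_J_def)
    have ue: "u \<in> ell2" using u(1) by (simp add: domJ_def)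
    have "(\<lambda>n. Jop c1 c2 u n - z * u n) = (\<lambda>n. (mu - z) * u n)" using u(3) by (simp add: algebra_simps)
    hence "l2norm u \<le> C * (cmod (mu - z) * l2norm u)" using C[OF u(1)] l2norm_scale[OF ue] by simp
    also have "\<dots> \<le> \<bar>C\<bar> * cmod (mu - z) * l2norm u"
      using l2norm_nonneg[OF ue] by (simp add: mult_right_mono mult.assoc)
    also have "\<dots> < l2norm u"
    proof -
      have "cmod (mu - z) \<le> 1/(\<bar>C\<bar>+1)" using mu(2) by (simp add: dist_norm)
      hence "\<bar>C\<bar> * cmod (mu - z) \<le> \<bar>C\<bar> * (1/(\<bar>C\<bar>+1))" by (rule mult_left_mono) simp
      also have "\<dots> < 1" by (simp add: field_simps)
      finally have "\<bar>C\<bar> * cmod (mu - z) < 1" .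
      thus ?thesis using l2norm_pos[OF ue u(2)] by simp
    qed
    finally show False by simp
    qed
  qed
qed

lemma sep:
  assumes "z \<notin> closure E"
  shows "\<exists>d>0. \<forall>mu\<in>E. cmod (mu - z) \<ge> d"
proof -
  have "open (- closure E)" by (rule open_Compl) simp
  then obtain d where d: "d > 0" "ball z d \<subseteq> - closure E" using assms open_contains_ball by blast
  have "cmod (mu - z) \<ge> d" if "mu \<in> E" for mu
  proof (rule ccontr)
    assume "\<not> cmod (mu - z) \<ge> d"
    hence "mu \<in> ball z d" by (simp add: dist_norm norm_minus_commute)
    thus False using d that closure_subset[of E] by blast
  qed
  thus ?thesis using d by blast
qed


context blk
begin

lemma spec_sub:
  assumes rnz: "\<And>m. 2*m+s \<noteq> 0 \<Longrightarrow> r m \<noteq> 0"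
  and b0: "s = 0 \<Longrightarrow> p 0 = 0 \<and> r 0 = 0 \<and> q 0 = 1"
  shows "spectrum_J c1 c2 \<subseteq> closure (eigenvalues_J c1 c2)"
proof
  fix z assume zs: "z \<in> spectrum_J c1 c2"
  show "z \<in> closure (eigenvalues_J c1 c2)"
  proof (rule ccontr)
    assume "z \<notin> closure (eigenvalues_J c1 c2)"
    then obtain d where d: "d > 0" and dE: "\<And>mu. mu \<in> eigenvalues_J c1 c2 \<Longrightarrow> cmod (mu - z) \<ge> d"
      using sep by blast
    have E: "cmod (of_real (mup (p m) (q m) (r m)) - z) \<ge> d \<and> cmod (of_real (mum (p m) (q m) (r m)) - z) \<ge> d"
      if "2*m+s \<noteq> 0" for m
      using dE eig_mu[OF rnz[OF that] that] by blast
    have one: "cmod (1 - z) \<ge> d" if "s = 0"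
    proof -
      have "(1::complex) \<in> eigenvalues_J c1 c2"
        by (rule eig_sup[of 0 0 1]) (use b0[OF that] that in auto)
      thus ?thesis using dE by blast
    qed
    have "z \<in> resolvent_set_J c1 c2"
    proof (rule resolvent[OF d])
      fix m and x1 x2 :: complex
      assume c: "2*m+s = 0 \<Longrightarrow> x1 = 0"
      show "d\<^sup>2*((cmod x1)\<^sup>2+(cmod x2)\<^sup>2) \<le>
       (cmod ((of_real (p m) - z) * x1 + of_real (r m) * x2))\<^sup>2 + (cmod (of_real (r m) * x1 + (of_real (q m) - z) * x2))\<^sup>2"
      proof (cases "2*m+s = 0")
        case False
        from E[OF False] show ?thesis using d by (intro block_bound[OF mu_sum mu_prod]) auto
      next
        case True
        hence s0: "s = 0" and m0: "m = 0" and x1: "x1 = 0" using c by auto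
        have "d\<^sup>2 * (cmod x2)\<^sup>2 \<le> (cmod (1 - z))\<^sup>2 * (cmod x2)\<^sup>2"
          by (rule mult_right_mono) (use one[OF s0] d in \<open>simp_all add: power_mono\<close>)
        thus ?thesis using b0[OF s0] m0 x1 by (simp add: norm_mult power_mult_distrib)
      qed
    next
      fix m and g1 g2 :: complex
      assume c: "2*m+s = 0 \<Longrightarrow> g1 = 0"
      show "\<exists>x1 x2. (2*m+s = 0 \<longrightarrow> x1 = 0) \<and>
       (of_real (p m) - z) * x1 + of_real (r m) * x2 = g1 \<and> of_real (r m) * x1 + (of_real (q m) - z) * x2 = g2"
      proof (cases "2*m+s = 0")
        case False
        have "z \<noteq> of_real (mup (p m) (q m) (r m))" "z \<noteq> of_real (mum (p m) (q m) (r m))"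
          using E[OF False] d by auto
        from block_solve[OF this, of g1 g2] obtain x1 x2 where
          "(of_real (p m) - z) * x1 + of_real (r m) * x2 = g1" "of_real (r m) * x1 + (of_real (q m) - z) * x2 = g2"
          by (elim exE conjE)
        thus ?thesis using False by (rule_tac exI[of _ x1], rule_tac exI[of _ x2]) auto
      next
        case True
        hence s0: "s = 0" and m0: "m = 0" and g1: "g1 = 0" using c by auto
        have "1 - z \<noteq> 0" using one[OF s0] d by auto
        show ?thesis
          by (rule exI[of _ 0], rule exI[of _ "g2 / (1 - z)"]) (use b0[OF s0] m0 g1 \<open>1 - z \<noteq> 0\<close> in simp)
      qed
    qed
    thus False using zs by (simp add: spectrum_J_def)
  qed
qed

end


lemma blk1:
  assumes "c2 = 0"
  shows "blk c1 c2 1 (\<lambda>m. 2*real m+1) (\<lambda>m. 2*real m+2) (\<lambda>m. c1*(2*real m+1))"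
proof
  fix u :: "nat \<Rightarrow> complex" and m :: nat
  show "Jop c1 c2 u (2*m+1) = of_real (2*real m+1) * u (2*m+1) + of_real (c1*(2*real m+1)) * u (2*m+1+1)"
    using assms by (simp add: Jop_def offdiag_def cseq_def add_ac)
  show "Jop c1 c2 u (2*m+1+1) = of_real (c1*(2*real m+1)) * u (2*m+1) + of_real (2*real m+2) * u (2*m+1+1)"
    using assms by (simp add: Jop_def offdiag_def cseq_def add_ac)
qed simp

lemma blk2:
  assumes "c1 = 0"
  shows "blk c1 c2 0 (\<lambda>m. 2*real m) (\<lambda>m. 2*real m+1) (\<lambda>m. c2*(2*real m))"
proof
  fix u :: "nat \<Rightarrow> complex" and m :: nat
  show "Jop c1 c2 u (2*m+0) = of_real (2*real m) * u (2*m+0) + of_real (c2*(2*real m)) * u (2*m+0+1)"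
  proof (cases m)
    case 0 thus ?thesis by (simp add: Jop_def)
  next
    case (Suc k)
    have "odd (2*m - 1)" using Suc by simp
    thus ?thesis using assms Suc by (simp add: Jop_def offdiag_def cseq_def)
  qed
  show "Jop c1 c2 u (2*m+0+1) = of_real (c2*(2*real m)) * u (2*m+0) + of_real (2*real m+1) * u (2*m+0+1)"
    using assms by (simp add: Jop_def offdiag_def cseq_def add_ac)
qed simp


lemma mu1:
  "mup (2*real m+1) (2*real m+2) (c1*(2*real m+1)) = lam_plus \<bar>c1\<bar> (Suc m)"
  "mum (2*real m+1) (2*real m+2) (c1*(2*real m+1)) = lam_minus \<bar>c1\<bar> (Suc m)"
proof -
  have arg: "(2*real m+1 - (2*real m+2))\<^sup>2 + 4*(c1*(2*real m+1))\<^sup>2 = 4*\<bar>c1\<bar>\<^sup>2*(2*real (Suc m) - 1)\<^sup>2 + 1"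
    by (simp add: power2_eq_square algebra_simps)
  have s: "2*real m+1 + (2*real m+2) = 4*real (Suc m) - 1" by simp
  show "mup (2*real m+1) (2*real m+2) (c1*(2*real m+1)) = lam_plus \<bar>c1\<bar> (Suc m)"
    unfolding mup_def lam_plus_def arg s ..
  show "mum (2*real m+1) (2*real m+2) (c1*(2*real m+1)) = lam_minus \<bar>c1\<bar> (Suc m)"
    unfolding mum_def lam_minus_def arg s ..
qed

lemma mu2:
  "mup (2*real m) (2*real m+1) (c2*(2*real m)) = tlam_plus \<bar>c2\<bar> (Suc m)"
  "mum (2*real m) (2*real m+1) (c2*(2*real m)) = tlam_minus \<bar>c2\<bar> (Suc m)"
proof -
  have arg: "(2*real m - (2*real m+1))\<^sup>2 + 4*(c2*(2*real m))\<^sup>2 = 4*\<bar>c2\<bar>\<^sup>2*(2*real (Suc m) - 2)\<^sup>2 + 1"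
    by (simp add: power2_eq_square algebra_simps)
  have s: "2*real m + (2*real m+1) = 4*real (Suc m) - 3" by simp
  show "mup (2*real m) (2*real m+1) (c2*(2*real m)) = tlam_plus \<bar>c2\<bar> (Suc m)"
    unfolding mup_def tlam_plus_def arg s ..
  show "mum (2*real m) (2*real m+1) (c2*(2*real m)) = tlam_minus \<bar>c2\<bar> (Suc m)"
    unfolding mum_def tlam_minus_def arg s ..
qed

lemma eig1:
  assumes c2: "c2 = 0" and c1: "c1 \<noteq> 0"
  shows "eigenvalues_J c1 c2 =
    {complex_of_real (lam_plus \<bar>c1\<bar> n) | n. n \<ge> 1} \<union> {complex_of_real (lam_minus \<bar>c1\<bar> n) | n. n \<ge> 1}"
proof -
  interpret b: blk c1 c2 1 "\<lambda>m. 2*real m+1" "\<lambda>m. 2*real m+2" "\<lambda>m. c1*(2*real m+1)"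
    by (rule blk1[OF c2])
  show ?thesis
  proof (intro equalityI subsetI)
    fix z assume "z \<in> eigenvalues_J c1 c2"
    from b.eig_kernel[OF this] obtain m where
      "z = of_real (mup (2*real m+1) (2*real m+2) (c1*(2*real m+1))) \<or> z = of_real (mum (2*real m+1) (2*real m+2) (c1*(2*real m+1)))"
      by (elim exE conjE)
    hence "z = of_real (lam_plus \<bar>c1\<bar> (Suc m)) \<or> z = of_real (lam_minus \<bar>c1\<bar> (Suc m))" unfolding mu1 .
    thus "z \<in> {complex_of_real (lam_plus \<bar>c1\<bar> n) | n. n \<ge> 1} \<union> {complex_of_real (lam_minus \<bar>c1\<bar> n) | n. n \<ge> 1}"
    proof
      assume "z = of_real (lam_plus \<bar>c1\<bar> (Suc m))"
      hence "z \<in> {complex_of_real (lam_plus \<bar>c1\<bar> n) | n. n \<ge> 1}" by (intro CollectI exI[of _ "Suc m"]) simp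
      thus ?thesis by (rule UnI1)
    next
      assume "z = of_real (lam_minus \<bar>c1\<bar> (Suc m))"
      hence "z \<in> {complex_of_real (lam_minus \<bar>c1\<bar> n) | n. n \<ge> 1}" by (intro CollectI exI[of _ "Suc m"]) simp
      thus ?thesis by (rule UnI2)
    qed
  next
    fix z assume "z \<in> {complex_of_real (lam_plus \<bar>c1\<bar> n) | n. n \<ge> 1} \<union> {complex_of_real (lam_minus \<bar>c1\<bar> n) | n. n \<ge> 1}"
    then obtain n where n: "n \<ge> 1" and z: "z = of_real (lam_plus \<bar>c1\<bar> n) \<or> z = of_real (lam_minus \<bar>c1\<bar> n)" by blast
    obtain m where m: "n = Suc m" using n by (cases n) auto
    have rnz: "c1*(2*real m+1) \<noteq> 0" using c1 by (simp add: add_pos_nonneg)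
    from z show "z \<in> eigenvalues_J c1 c2"
    proof
      assume "z = of_real (lam_plus \<bar>c1\<bar> n)"
      hence "z = of_real (mup (2*real m+1) (2*real m+2) (c1*(2*real m+1)))" unfolding m mu1 .
      thus ?thesis using b.eig_mu[of m "mup (2*real m+1) (2*real m+2) (c1*(2*real m+1))"] rnz by simp
    next
      assume "z = of_real (lam_minus \<bar>c1\<bar> n)"
      hence "z = of_real (mum (2*real m+1) (2*real m+2) (c1*(2*real m+1)))" unfolding m mu1 .
      thus ?thesis using b.eig_mu[of m "mum (2*real m+1) (2*real m+2) (c1*(2*real m+1))"] rnz by simp
    qed
  qed
qed

lemma spec1:
  assumes c2: "c2 = 0" and c1: "c1 \<noteq> 0"
  shows "spectrum_J c1 c2 = closure (eigenvalues_J c1 c2)"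
proof -
  interpret b: blk c1 c2 1 "\<lambda>m. 2*real m+1" "\<lambda>m. 2*real m+2" "\<lambda>m. c1*(2*real m+1)"
    by (rule blk1[OF c2])
  have "spectrum_J c1 c2 \<subseteq> closure (eigenvalues_J c1 c2)"
    by (rule b.spec_sub) (use c1 in \<open>simp_all add: add_pos_nonneg\<close>)
  thus ?thesis using closure_sub_spectrum by blast
qed

lemma eig2:
  assumes c1: "c1 = 0" and c2: "c2 \<noteq> 0"
  shows "eigenvalues_J c1 c2 = {1} \<union>
    {complex_of_real (tlam_plus \<bar>c2\<bar> n) | n. n \<ge> 2} \<union> {complex_of_real (tlam_minus \<bar>c2\<bar> n) | n. n \<ge> 2}"
proof -
  interpret b: blk c1 c2 0 "\<lambda>m. 2*real m" "\<lambda>m. 2*real m+1" "\<lambda>m. c2*(2*real m)"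
    by (rule blk2[OF c1])
  show ?thesis
  proof (intro equalityI subsetI)
    fix z assume "z \<in> eigenvalues_J c1 c2"
    from b.eig_kernel[OF this] obtain m x1 x2 where h: "2*m+0 = 0 \<longrightarrow> x1 = 0" "x1 \<noteq> 0 \<or> x2 \<noteq> 0"
      "of_real (c2*(2*real m)) * x1 + (of_real (2*real m+1) - z) * x2 = 0"
      "z = of_real (mup (2*real m) (2*real m+1) (c2*(2*real m))) \<or> z = of_real (mum (2*real m) (2*real m+1) (c2*(2*real m)))"
      by (elim exE conjE) simp
    show "z \<in> {1} \<union> {complex_of_real (tlam_plus \<bar>c2\<bar> n) | n. n \<ge> 2} \<union> {complex_of_real (tlam_minus \<bar>c2\<bar> n) | n. n \<ge> 2}"
    proof (cases "m = 0")
      case True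
      hence "x1 = 0" "x2 \<noteq> 0" using h(1,2) by auto
      hence "z = 1" using h(3) True by simp
      thus ?thesis by simp
    next
      case False
      have "z = of_real (tlam_plus \<bar>c2\<bar> (Suc m)) \<or> z = of_real (tlam_minus \<bar>c2\<bar> (Suc m))" using h(4) unfolding mu2 .
      thus ?thesis
      proof
        assume "z = of_real (tlam_plus \<bar>c2\<bar> (Suc m))"
        hence "z \<in> {complex_of_real (tlam_plus \<bar>c2\<bar> n) | n. n \<ge> 2}" using False by (intro CollectI exI[of _ "Suc m"]) simp
        thus ?thesis by blast
      next
        assume "z = of_real (tlam_minus \<bar>c2\<bar> (Suc m))"
        hence "z \<in> {complex_of_real (tlam_minus \<bar>c2\<bar> n) | n. n \<ge> 2}" using False by (intro CollectI exI[of _ "Suc m"]) simp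
        thus ?thesis by blast
      qed
    qed
  next
    fix z assume z: "z \<in> {1} \<union> {complex_of_real (tlam_plus \<bar>c2\<bar> n) | n. n \<ge> 2} \<union> {complex_of_real (tlam_minus \<bar>c2\<bar> n) | n. n \<ge> 2}"
    show "z \<in> eigenvalues_J c1 c2"
    proof (cases "z = 1")
      case True
      show ?thesis unfolding True by (rule b.eig_sup[of 0 0 1]) simp_all
    next
      case False
      then obtain n where n: "n \<ge> 2" and z: "z = of_real (tlam_plus \<bar>c2\<bar> n) \<or> z = of_real (tlam_minus \<bar>c2\<bar> n)"
        using z by blast
      obtain m where m: "n = Suc m" and m1: "m \<ge> 1" using n by (cases n) auto
      have rnz: "c2*(2*real m) \<noteq> 0" using c2 m1 by simp
      have m2: "2*m+0 \<noteq> 0" using m1 by simp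
      from z show "z \<in> eigenvalues_J c1 c2"
      proof
        assume "z = of_real (tlam_plus \<bar>c2\<bar> n)"
        hence "z = of_real (mup (2*real m) (2*real m+1) (c2*(2*real m)))" unfolding m mu2 .
        thus ?thesis using b.eig_mu[of m "mup (2*real m) (2*real m+1) (c2*(2*real m))"] rnz m2 by simp
      next
        assume "z = of_real (tlam_minus \<bar>c2\<bar> n)"
        hence "z = of_real (mum (2*real m) (2*real m+1) (c2*(2*real m)))" unfolding m mu2 .
        thus ?thesis using b.eig_mu[of m "mum (2*real m) (2*real m+1) (c2*(2*real m))"] rnz m2 by simp
      qed
    qed
  qed
qed

lemma spec2:
  assumes c1: "c1 = 0" and c2: "c2 \<noteq> 0"
  shows "spectrum_J c1 c2 = closure (eigenvalues_J c1 c2)"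
proof -
  interpret b: blk c1 c2 0 "\<lambda>m. 2*real m" "\<lambda>m. 2*real m+1" "\<lambda>m. c2*(2*real m)"
    by (rule blk2[OF c1])
  have "spectrum_J c1 c2 \<subseteq> closure (eigenvalues_J c1 c2)"
    by (rule b.spec_sub) (use c2 in simp_all)
  thus ?thesis using closure_sub_spectrum by blast
qed


lemma asym_plus2:
  fixes c b K :: real
  assumes c: "c > 0" and b: "b \<ge> 0" "b \<le> 4*c"
  shows "(\<lambda>n::nat. (sqrt ((4*c*real n - b)\<^sup>2 + 1) - (4*c*real n - b))/2 + K) \<in> O(\<lambda>n. 1)"
proof (rule bigoI[where c="1/2 + \<bar>K\<bar>"])
  show "\<forall>\<^sub>F n in sequentially. norm ((sqrt ((4*c*real n - b)\<^sup>2 + 1) - (4*c*real n - b))/2 + K) \<le> (1/2 + \<bar>K\<bar>) * norm (1::real)"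
  proof (rule eventually_sequentiallyI[of 1])
    fix n :: nat assume n: "1 \<le> n"
    define X where "X = 4*c*real n - b"
    have "4*c*real n \<ge> 4*c*1" using n c by (intro mult_left_mono) auto
    hence Xp: "X \<ge> 0" using b X_def by simp
    have SX: "sqrt (X\<^sup>2+1) \<ge> X" by (rule real_le_rsqrt) simp
    have SX1: "sqrt (X\<^sup>2+1) \<le> X + 1"
    proof -
      have "sqrt (X\<^sup>2+1) \<le> sqrt ((X+1)\<^sup>2)" by (rule real_sqrt_le_mono) (use Xp in \<open>simp add: power2_eq_square algebra_simps\<close>)
      thus ?thesis using Xp by simp
    qed
    have "\<bar>(sqrt (X\<^sup>2+1) - X)/2 + K\<bar> \<le> \<bar>(sqrt (X\<^sup>2+1) - X)/2\<bar> + \<bar>K\<bar>" by (rule abs_triangle_ineq)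
    also have "\<bar>(sqrt (X\<^sup>2+1) - X)/2\<bar> \<le> 1/2" using SX SX1 by simp
    finally have "\<bar>(sqrt (X\<^sup>2+1) - X)/2 + K\<bar> \<le> 1/2 + \<bar>K\<bar>" by simp
    thus "norm ((sqrt ((4*c*real n - b)\<^sup>2 + 1) - (4*c*real n - b))/2 + K) \<le> (1/2 + \<bar>K\<bar>) * norm (1::real)"
      unfolding X_def by simp
  qed
qed

lemma asymptotics:
  fixes c :: real assumes c: "c > 0"
  shows "(\<lambda>n. lam_plus c n - 2 * (1 + c) * real n) \<in> O(\<lambda>n. 1) \<and>
    (\<lambda>n. tlam_plus c n - 2 * (1 + c) * real n) \<in> O(\<lambda>n. 1) \<and>
    (\<lambda>n. lam_minus c n - (2 * (1 - c) * real n + (c - 1/2) - 1 / (16 * c * real n)))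
       \<in> O(\<lambda>n. 1 / (real n)\<^sup>2) \<and>
    (\<lambda>n. tlam_minus c n - (2 * (1 - c) * real n + (2 * c - 3/2) - 1 / (16 * c * real n)))
       \<in> O(\<lambda>n. 1 / (real n)\<^sup>2)"
proof (intro conjI)
  have a1: "4*c\<^sup>2*(2*real n - 1)\<^sup>2 = (4*c*real n - 2*c)\<^sup>2" for n
    unfolding power2_eq_square by algebra
  have a2: "4*c\<^sup>2*(2*real n - 2)\<^sup>2 = (4*c*real n - 4*c)\<^sup>2" for n
    unfolding power2_eq_square by algebra
  have e1: "(\<lambda>n. lam_plus c n - 2 * (1 + c) * real n) =
     (\<lambda>n::nat. (sqrt ((4*c*real n - 2*c)\<^sup>2 + 1) - (4*c*real n - 2*c))/2 + (- c - 1/2))"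
    by (rule ext) (unfold lam_plus_def a1, simp add: field_simps)
  show "(\<lambda>n. lam_plus c n - 2 * (1 + c) * real n) \<in> O(\<lambda>n. 1)"
    unfolding e1 by (rule asym_plus2) (use c in auto)
  have e2: "(\<lambda>n. tlam_plus c n - 2 * (1 + c) * real n) =
     (\<lambda>n::nat. (sqrt ((4*c*real n - 4*c)\<^sup>2 + 1) - (4*c*real n - 4*c))/2 + (- 2*c - 3/2))"
    by (rule ext) (unfold tlam_plus_def a2, simp add: field_simps)
  show "(\<lambda>n. tlam_plus c n - 2 * (1 + c) * real n) \<in> O(\<lambda>n. 1)"
    unfolding e2 by (rule asym_plus2) (use c in auto)
  have e3: "(\<lambda>n. lam_minus c n - (2 * (1 - c) * real n + (c - 1/2) - 1 / (16 * c * real n))) =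
     (\<lambda>n::nat. ((4*c*real n - 2*c) - sqrt ((4*c*real n - 2*c)\<^sup>2 + 1))/2 + 1/(16*c*real n))"
    by (rule ext) (unfold lam_minus_def a1, simp add: field_simps)
  show "(\<lambda>n. lam_minus c n - (2 * (1 - c) * real n + (c - 1/2) - 1 / (16 * c * real n))) \<in> O(\<lambda>n. 1 / (real n)\<^sup>2)"
    unfolding e3 by (rule asym_minus) (use c in auto)
  have e4: "(\<lambda>n. tlam_minus c n - (2 * (1 - c) * real n + (2 * c - 3/2) - 1 / (16 * c * real n))) =
     (\<lambda>n::nat. ((4*c*real n - 4*c) - sqrt ((4*c*real n - 4*c)\<^sup>2 + 1))/2 + 1/(16*c*real n))"
    by (rule ext) (unfold tlam_minus_def a2, simp add: field_simps)
  show "(\<lambda>n. tlam_minus c n - (2 * (1 - c) * real n + (2 * c - 3/2) - 1 / (16 * c * real n))) \<in> O(\<lambda>n. 1 / (real n)\<^sup>2)"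
    unfolding e4 by (rule asym_minus) (use c in auto)
qed

theorem theorem5:
  fixes c1 c2 :: real
  assumes "c1 * c2 = 0" and "max \<bar>c1\<bar> \<bar>c2\<bar> \<noteq> 0"
  shows "let c = max \<bar>c1\<bar> \<bar>c2\<bar> in
    spectrum_J c1 c2 = closure (eigenvalues_J c1 c2) \<and>
    (c1 \<noteq> 0 \<and> c2 = 0 \<longrightarrow>
       eigenvalues_J c1 c2 =
         {complex_of_real (lam_plus c n) | n. n \<ge> 1} \<union> {complex_of_real (lam_minus c n) | n. n \<ge> 1}) \<and>
    (c1 = 0 \<and> c2 \<noteq> 0 \<longrightarrow>
       eigenvalues_J c1 c2 = {1} \<union>
         {complex_of_real (tlam_plus c n) | n. n \<ge> 2} \<union> {complex_of_real (tlam_minus c n) | n. n \<ge> 2}) \<and>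
    (\<lambda>n. lam_plus c n - 2 * (1 + c) * real n) \<in> O(\<lambda>n. 1) \<and>
    (\<lambda>n. tlam_plus c n - 2 * (1 + c) * real n) \<in> O(\<lambda>n. 1) \<and>
    (\<lambda>n. lam_minus c n - (2 * (1 - c) * real n + (c - 1/2) - 1 / (16 * c * real n)))
       \<in> O(\<lambda>n. 1 / (real n)\<^sup>2) \<and>
    (\<lambda>n. tlam_minus c n - (2 * (1 - c) * real n + (2 * c - 3/2) - 1 / (16 * c * real n)))
       \<in> O(\<lambda>n. 1 / (real n)\<^sup>2)"
proof -
  define c where "c = max \<bar>c1\<bar> \<bar>c2\<bar>"
  have "c \<ge> 0" unfolding c_def by (simp add: le_max_iff_disj)
  hence cpos: "c > 0" using assms(2) c_def by simp
  have cases: "(c1 \<noteq> 0 \<and> c2 = 0) \<or> (c1 = 0 \<and> c2 \<noteq> 0)" using assms by (auto simp: max_def split: if_splits)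
  have spec: "spectrum_J c1 c2 = closure (eigenvalues_J c1 c2)"
    using cases spec1 spec2 by blast
  have i1: "c1 \<noteq> 0 \<and> c2 = 0 \<longrightarrow>
       eigenvalues_J c1 c2 =
         {complex_of_real (lam_plus c n) | n. n \<ge> 1} \<union> {complex_of_real (lam_minus c n) | n. n \<ge> 1}"
  proof
    assume h: "c1 \<noteq> 0 \<and> c2 = 0"
    hence "c = \<bar>c1\<bar>" using c_def by simp
    thus "eigenvalues_J c1 c2 =
         {complex_of_real (lam_plus c n) | n. n \<ge> 1} \<union> {complex_of_real (lam_minus c n) | n. n \<ge> 1}"
      using eig1 h by simp
  qed
  have i2: "c1 = 0 \<and> c2 \<noteq> 0 \<longrightarrow>
       eigenvalues_J c1 c2 = {1} \<union>
         {complex_of_real (tlam_plus c n) | n. n \<ge> 2} \<union> {complex_of_real (tlam_minus c n) | n. n \<ge> 2}"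
  proof
    assume h: "c1 = 0 \<and> c2 \<noteq> 0"
    hence "c = \<bar>c2\<bar>" using c_def by simp
    thus "eigenvalues_J c1 c2 = {1} \<union>
         {complex_of_real (tlam_plus c n) | n. n \<ge> 2} \<union> {complex_of_real (tlam_minus c n) | n. n \<ge> 2}"
      using eig2 h by simp
  qed
  show ?thesis unfolding Let_def c_def[symmetric]
    using spec i1 i2 asymptotics[OF cpos] by blast
qed


end
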